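(* Let $c\ge2$, let $\Gamma=(V,E)$ be a $c$-uniform unoriented hypergraph with no isolated vertices, let $k\ge2$ and let $V_1,\dots,V_k$ be the color classes of a proper strong $k$-coloring of $\Gamma$. Then the functions $g_{ij}$ (for all distinct $i,j$) are eigenfunctions of the normalized Laplacian $L$ if and only if for all $i=1,\dots,k$ and all $v\in V$, \[ \bigl|\{e\in E: v\in e,\ e\cap V_i\neq\varnothing\}\bigr|=\begin{cases}\dfrac{(c-1)\deg v}{k-1}, & v\notin V_i,\\[2mm] \deg v, & v\in V_i.\end{cases} \] In this case the corresponding eigenvalue is $\dfrac{k-c}{k-1}$.
   Context: A hypergraph has finite vertex set $V$ and edge set $E\subseteq\mathcal P(V)$; it is $c$-uniform if $|e|=c$ for all $e$, and unoriented means all incidences have orientation $+1$. $\deg v=|\{e\in E: v\in e\}|\ge1$, $D=\mathrm{diag}(\deg v)$, adjacency $A_{v,v}=0$ and $A_{v,w}=-|\{e\in E: v,w\in e\}|$ for $v\ne w$, normalized Laplacian $L=\mathrm{Id}-D^{-1}A$. A proper strong $k$-coloring is a map $V\to\{1,\dots,k\}$ such that any two distinct vertices in a common edge receive different colors. For color classes $V_1,\dots,V_k$ and distinct $i,j$, $g_{ij}(w)=1$ if $w\in V_i$, $-1$ if $w\in V_j$, $0$ otherwise. *)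

theory Defs
  imports Complex_Main
begin

text \<open>A hypergraph on vertex set V (finite) with edge set E, a set of subsets of V.
  Unoriented: all incidences have orientation +1, so no orientation data is needed.\<close>

definition hypergraph :: "'a set \<Rightarrow> 'a set set \<Rightarrow> bool" where
  "hypergraph V E \<longleftrightarrow> finite V \<and> E \<subseteq> Pow V"

definition uniform :: "nat \<Rightarrow> 'a set set \<Rightarrow> bool" where
  "uniform c E \<longleftrightarrow> (\<forall>e\<in>E. card e = c)"

definition hdeg :: "'a set set \<Rightarrow> 'a \<Rightarrow> nat" where
  "hdeg E v = card {e\<in>E. v \<in> e}"

definition hadj :: "'a set set \<Rightarrow> 'a \<Rightarrow> 'a \<Rightarrow> real" where
  "hadj E v w = (if v = w then 0 else - real (card {e\<in>E. v \<in> e \<and> w \<in> e}))"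

definition nlap :: "'a set \<Rightarrow> 'a set set \<Rightarrow> ('a \<Rightarrow> real) \<Rightarrow> 'a \<Rightarrow> real" where
  "nlap V E f v = f v - (1 / real (hdeg E v)) * (\<Sum>w\<in>V. hadj E v w * f w)"

definition eigenfunction_with :: "'a set \<Rightarrow> 'a set set \<Rightarrow> ('a \<Rightarrow> real) \<Rightarrow> real \<Rightarrow> bool" where
  "eigenfunction_with V E f mu \<longleftrightarrow> (\<exists>v\<in>V. f v \<noteq> 0) \<and> (\<forall>v\<in>V. nlap V E f v = mu * f v)"

definition eigenfunction :: "'a set \<Rightarrow> 'a set set \<Rightarrow> ('a \<Rightarrow> real) \<Rightarrow> bool" where
  "eigenfunction V E f \<longleftrightarrow> (\<exists>mu. eigenfunction_with V E f mu)"

definition proper_strong_coloring :: "'a set \<Rightarrow> 'a set set \<Rightarrow> nat \<Rightarrow> ('a \<Rightarrow> nat) \<Rightarrow> bool" where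
  "proper_strong_coloring V E k col \<longleftrightarrow>
     (\<forall>v\<in>V. col v \<in> {1..k}) \<and>
     (\<forall>e\<in>E. \<forall>v\<in>e. \<forall>w\<in>e. v \<noteq> w \<longrightarrow> col v \<noteq> col w)"

definition color_class :: "'a set \<Rightarrow> ('a \<Rightarrow> nat) \<Rightarrow> nat \<Rightarrow> 'a set" where
  "color_class V col i = {v\<in>V. col v = i}"

definition gfun :: "'a set \<Rightarrow> ('a \<Rightarrow> nat) \<Rightarrow> nat \<Rightarrow> nat \<Rightarrow> 'a \<Rightarrow> real" where
  "gfun V col i j w =
     (if w \<in> color_class V col i then 1 else if w \<in> color_class V col j then -1 else 0)"

end

theory Submission
  imports Defs
begin

locale hsetup =
  fixes V :: "'a set" and E :: "'a set set" and c k :: nat and col :: "'a \<Rightarrow> nat"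
  assumes hg: "hypergraph V E"
    and c2: "c \<ge> 2"
    and unif: "uniform c E"
    and noiso: "\<forall>v\<in>V. hdeg E v \<ge> 1"
    and k2: "k \<ge> 2"
    and col: "proper_strong_coloring V E k col"
begin

definition Ev where "Ev v = {e\<in>E. v\<in>e}"
definition ind :: "nat \<Rightarrow> 'a \<Rightarrow> real" where "ind i w = (if col w = i then 1 else 0)"
definition B where "B i v = (\<Sum>e\<in>Ev v. \<Sum>w\<in>e-{v}. ind i w)"

lemma finV: "finite V" using hg by (simp add: hypergraph_def)
lemma EsubV: "e \<in> E \<Longrightarrow> e \<subseteq> V" using hg by (auto simp: hypergraph_def)
lemma finE: "finite E"
  using hg by (meson finite_Pow_iff finite_subset hypergraph_def)
lemma fine: "e \<in> E \<Longrightarrow> finite e" using EsubV finV finite_subset by blast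
lemma finEv: "finite (Ev v)" using finE by (simp add: Ev_def)
lemma hdeg_Ev: "hdeg E v = card (Ev v)" by (simp add: hdeg_def Ev_def)
lemma hdeg_pos: "v \<in> V \<Longrightarrow> real (hdeg E v) > 0" using noiso by force
lemma colV: "v \<in> V \<Longrightarrow> col v \<in> {1..k}" using col by (simp add: proper_strong_coloring_def)
lemma propc: "e \<in> E \<Longrightarrow> v \<in> e \<Longrightarrow> w \<in> e \<Longrightarrow> v \<noteq> w \<Longrightarrow> col v \<noteq> col w"
  using col by (simp add: proper_strong_coloring_def)

lemma adj_sum:
  assumes "v \<in> V"
  shows "(\<Sum>w\<in>V. hadj E v w * f w) = - (\<Sum>e\<in>Ev v. \<Sum>w\<in>e-{v}. f w)"
proof -
  have "(\<Sum>e\<in>Ev v. \<Sum>w\<in>e-{v}. f w) = (\<Sum>e\<in>Ev v. \<Sum>w\<in>V. if w\<in>e \<and> w\<noteq>v then f w else 0)"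
  proof (rule sum.cong[OF refl])
    fix e assume "e \<in> Ev v"
    then have "e \<subseteq> V" using EsubV by (auto simp: Ev_def)
    then have "{w\<in>V. w\<in>e \<and> w\<noteq>v} = e - {v}" by auto
    then show "(\<Sum>w\<in>e-{v}. f w) = (\<Sum>w\<in>V. if w\<in>e \<and> w\<noteq>v then f w else 0)"
      using sum.inter_filter[OF finV, of f "\<lambda>w. w\<in>e \<and> w\<noteq>v"] by simp
  qed
  also have "\<dots> = (\<Sum>w\<in>V. \<Sum>e\<in>Ev v. if w\<in>e \<and> w\<noteq>v then f w else 0)" by (rule sum.swap)
  also have "\<dots> = (\<Sum>w\<in>V. - hadj E v w * f w)"
  proof (rule sum.cong[OF refl])
    fix w assume "w \<in> V"
    show "(\<Sum>e\<in>Ev v. if w\<in>e \<and> w\<noteq>v then f w else 0) = - hadj E v w * f w"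
    proof (cases "w = v")
      case True then show ?thesis by (simp add: hadj_def)
    next
      case False
      have "(\<Sum>e\<in>Ev v. if w\<in>e \<and> w\<noteq>v then f w else 0) = (\<Sum>e\<in>{e\<in>Ev v. w\<in>e}. f w)"
        using sum.inter_filter[OF finEv[of v], of "\<lambda>e. f w" "\<lambda>e. w\<in>e"] False by simp
      also have "\<dots> = real (card {e\<in>Ev v. w\<in>e}) * f w" by simp
      also have "{e\<in>Ev v. w\<in>e} = {e\<in>E. v \<in> e \<and> w \<in> e}" by (auto simp: Ev_def)
      finally show ?thesis using False by (simp add: hadj_def)
    qed
  qed
  finally show ?thesis by (simp add: sum_negf)
qed

lemma gfun_ind: "w \<in> V \<Longrightarrow> i \<noteq> j \<Longrightarrow> gfun V col i j w = ind i w - ind j w"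
  by (auto simp: gfun_def ind_def color_class_def)

lemma nlap_g:
  assumes "v \<in> V" "i \<noteq> j"
  shows "nlap V E (gfun V col i j) v = gfun V col i j v + (B i v - B j v) / real (hdeg E v)"
proof -
  have "(\<Sum>e\<in>Ev v. \<Sum>w\<in>e-{v}. gfun V col i j w) = (\<Sum>e\<in>Ev v. \<Sum>w\<in>e-{v}. ind i w - ind j w)"
    using EsubV gfun_ind[OF _ assms(2)] by (intro sum.cong refl) (auto simp: Ev_def)
  also have "\<dots> = B i v - B j v" by (simp add: B_def sum_subtractf)
  finally show ?thesis using adj_sum[OF assms(1)] by (simp add: nlap_def diff_divide_distrib)
qed

lemma B_own:
  assumes "v \<in> V" "col v = i"
  shows "B i v = 0"
proof -
  have "ind i w = 0" if "e \<in> Ev v" "w \<in> e - {v}" for e w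
    using propc[of e v w] that assms by (auto simp: Ev_def ind_def)
  then show ?thesis by (simp add: B_def)
qed

lemma B_card:
  assumes "v \<in> V" "col v \<noteq> i"
  shows "B i v = real (card {e\<in>E. v\<in>e \<and> e \<inter> color_class V col i \<noteq> {}})"
proof -
  have inner: "(\<Sum>w\<in>e-{v}. ind i w) = (if e \<inter> color_class V col i \<noteq> {} then 1 else 0)"
    if e: "e \<in> Ev v" for e
  proof (cases "e \<inter> color_class V col i = {}")
    case True
    then have "ind i w = 0" if "w \<in> e - {v}" for w
      using that e EsubV by (auto simp: ind_def color_class_def Ev_def)
    then show ?thesis using True by simp
  next
    case False
    then obtain u where u: "u \<in> e" "col u = i" by (auto simp: color_class_def)
    have uv: "u \<noteq> v" using u assms by auto
    have "ind i w = (if w = u then 1 else 0)" if "w \<in> e - {v}" for w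
      using that u propc[of e u w] e by (cases "w = u") (auto simp: ind_def Ev_def)
    then have "(\<Sum>w\<in>e-{v}. ind i w) = (\<Sum>w\<in>e-{v}. if w = u then 1 else 0)"
      by (intro sum.cong) auto
    also have "\<dots> = 1" using u uv e fine by (simp add: Ev_def)
    finally show ?thesis using False by simp
  qed
  have "B i v = (\<Sum>e\<in>Ev v. if e \<inter> color_class V col i \<noteq> {} then 1 else 0)"
    unfolding B_def using inner by (intro sum.cong) auto
  also have "\<dots> = (\<Sum>e\<in>{e\<in>Ev v. e \<inter> color_class V col i \<noteq> {}}. 1)"
    using sum.inter_filter[OF finEv, of "\<lambda>e. 1::real"] by simp
  also have "\<dots> = real (card {e\<in>E. v\<in>e \<and> e \<inter> color_class V col i \<noteq> {}})"
    by (simp add: Ev_def conj_assoc)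
  finally show ?thesis .
qed

lemma B_sum:
  assumes "v \<in> V"
  shows "(\<Sum>i\<in>{1..k}. B i v) = (real c - 1) * real (hdeg E v)"
proof -
  have "(\<Sum>i\<in>{1..k}. B i v) = (\<Sum>e\<in>Ev v. \<Sum>i\<in>{1..k}. \<Sum>w\<in>e-{v}. ind i w)"
    unfolding B_def by (rule sum.swap)
  also have "\<dots> = (\<Sum>e\<in>Ev v. \<Sum>w\<in>e-{v}. \<Sum>i\<in>{1..k}. ind i w)"
    by (intro sum.cong refl sum.swap)
  also have "\<dots> = (\<Sum>e\<in>Ev v. real c - 1)"
  proof (rule sum.cong[OF refl])
    fix e assume e: "e \<in> Ev v"
    have "(\<Sum>i\<in>{1..k}. ind i w) = 1" if "w \<in> e - {v}" for w
    proof -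
      have "w \<in> V" using that e EsubV by (auto simp: Ev_def)
      then have "col w \<in> {1..k}" by (rule colV)
      then show ?thesis unfolding ind_def by (simp add: sum.delta)
    qed
    then have "(\<Sum>w\<in>e-{v}. \<Sum>i\<in>{1..k}. ind i w) = real (card (e - {v}))" by simp
    also have "card (e - {v}) = c - 1" using e unif fine by (auto simp: Ev_def uniform_def)
    finally show "(\<Sum>w\<in>e-{v}. \<Sum>i\<in>{1..k}. ind i w) = real c - 1" using c2 by simp
  qed
  also have "\<dots> = (real c - 1) * real (hdeg E v)" by (simp add: hdeg_Ev)
  finally show ?thesis .
qed

end

theorem mainTheorem9:
  fixes V :: "'a set" and E :: "'a set set" and c k :: nat and col :: "'a \<Rightarrow> nat"
  assumes hg: "hypergraph V E"
    and Vne: "V \<noteq> {}"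
    and c2: "c \<ge> 2"
    and unif: "uniform c E"
    and noiso: "\<forall>v\<in>V. hdeg E v \<ge> 1"
    and k2: "k \<ge> 2"
    and col: "proper_strong_coloring V E k col"
  shows "((\<forall>i\<in>{1..k}. \<forall>j\<in>{1..k}. i \<noteq> j \<longrightarrow> eigenfunction V E (gfun V col i j)) \<longleftrightarrow>
          (\<forall>i\<in>{1..k}. \<forall>v\<in>V.
             real (card {e\<in>E. v \<in> e \<and> e \<inter> color_class V col i \<noteq> {}}) =
               (if v \<notin> color_class V col i
                then (real c - 1) * real (hdeg E v) / (real k - 1)
                else real (hdeg E v))))
       \<and> ((\<forall>i\<in>{1..k}. \<forall>v\<in>V.
             real (card {e\<in>E. v \<in> e \<and> e \<inter> color_class V col i \<noteq> {}}) =
               (if v \<notin> color_class V col i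
                then (real c - 1) * real (hdeg E v) / (real k - 1)
                else real (hdeg E v)))
          \<longrightarrow> (\<forall>i\<in>{1..k}. \<forall>j\<in>{1..k}. i \<noteq> j \<longrightarrow>
                 eigenfunction_with V E (gfun V col i j) ((real k - real c) / (real k - 1))))"
proof -
  interpret H: hsetup V E c k col using assms by unfold_locales
  let ?C = "\<forall>i\<in>{1..k}. \<forall>v\<in>V.
             real (card {e\<in>E. v \<in> e \<and> e \<inter> color_class V col i \<noteq> {}}) =
               (if v \<notin> color_class V col i
                then (real c - 1) * real (hdeg E v) / (real k - 1)
                else real (hdeg E v))"
  let ?D = "\<forall>i\<in>{1..k}. \<forall>v\<in>V. col v \<noteq> i \<longrightarrow> H.B i v = (real c - 1) * real (hdeg E v) / (real k - 1)"
  have own: "real (card {e\<in>E. v \<in> e \<and> e \<inter> color_class V col i \<noteq> {}}) = real (hdeg E v)"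
    if "v \<in> V" "col v = i" for v i
  proof -
    have "{e\<in>E. v \<in> e \<and> e \<inter> color_class V col i \<noteq> {}} = {e\<in>E. v \<in> e}"
      using that by (auto simp: color_class_def)
    then show ?thesis by (simp add: hdeg_def)
  qed
  have CD: "?C \<longleftrightarrow> ?D"
  proof
    assume C: ?C
    show ?D
    proof (intro ballI impI)
      fix i v assume "i \<in> {1..k}" "v \<in> V" "col v \<noteq> i"
      then show "H.B i v = (real c - 1) * real (hdeg E v) / (real k - 1)"
        using C H.B_card[of v i] by (auto simp: color_class_def)
    qed
  next
    assume D: ?D
    show ?C
    proof (intro ballI)
      fix i v assume "i \<in> {1..k}" "v \<in> V"
      then show "real (card {e\<in>E. v \<in> e \<and> e \<inter> color_class V col i \<noteq> {}}) =
               (if v \<notin> color_class V col i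
                then (real c - 1) * real (hdeg E v) / (real k - 1)
                else real (hdeg E v))"
        using D H.B_card[of v i] own[of v i] by (auto simp: color_class_def)
    qed
  qed
  have kpos: "real k - 1 > 0" using k2 by simp
  have part2: "\<forall>i\<in>{1..k}. \<forall>j\<in>{1..k}. i \<noteq> j \<longrightarrow>
                 eigenfunction_with V E (gfun V col i j) ((real k - real c) / (real k - 1))"
    if D: ?D
  proof (intro ballI impI)
    fix i j assume ij: "i \<in> {1..k}" "j \<in> {1..k}" "i \<noteq> j"
    have nz: "\<exists>v\<in>V. gfun V col i j v \<noteq> 0"
    proof -
      obtain v where v: "v \<in> V" using Vne by blast
      show ?thesis
      proof (cases "col v = i")
        case True then show ?thesis using v by (auto simp: gfun_def color_class_def)
      next
        case False
        then have "H.B i v = (real c - 1) * real (hdeg E v) / (real k - 1)" using D ij v by auto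
        moreover have "(real c - 1) * real (hdeg E v) / (real k - 1) > 0"
          using kpos c2 H.hdeg_pos[OF v] by simp
        ultimately have "H.B i v \<noteq> 0" by linarith
        then obtain e w where e: "e \<in> H.Ev v" "w \<in> e - {v}" "H.ind i w \<noteq> 0"
          unfolding H.B_def by (meson sum.neutral)
        then have "w \<in> V" "col w = i" using H.EsubV by (auto simp: H.Ev_def H.ind_def split: if_splits)
        then show ?thesis by (auto simp: gfun_def color_class_def)
      qed
    qed
    show "eigenfunction_with V E (gfun V col i j) ((real k - real c) / (real k - 1))"
      unfolding eigenfunction_with_def
    proof (intro conjI nz ballI)
      fix v assume v: "v \<in> V"
      have d: "real (hdeg E v) > 0" using H.hdeg_pos[OF v] .
      have mu: "(real k - real c) / (real k - 1) = 1 - (real c - 1) / (real k - 1)"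
        using kpos by (simp add: field_simps)
      show "nlap V E (gfun V col i j) v = (real k - real c) / (real k - 1) * gfun V col i j v"
      proof (cases "col v = i")
        case True
        then have "H.B i v = 0" "H.B j v = (real c - 1) * real (hdeg E v) / (real k - 1)"
          using H.B_own[OF v] D ij v by auto
        moreover have "gfun V col i j v = 1" using True v by (simp add: gfun_def color_class_def)
        ultimately show ?thesis using H.nlap_g[OF v ij(3)] d kpos mu by simp
      next
        case F1: False
        show ?thesis
        proof (cases "col v = j")
          case True
          then have "H.B j v = 0" "H.B i v = (real c - 1) * real (hdeg E v) / (real k - 1)"
            using H.B_own[OF v] D ij v F1 by auto
          moreover have "gfun V col i j v = -1" using True F1 v by (simp add: gfun_def color_class_def)
          ultimately show ?thesis using H.nlap_g[OF v ij(3)] d kpos mu by simp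
        next
          case False
          then have "H.B j v = H.B i v"
            using D ij v F1 by auto
          moreover have "gfun V col i j v = 0" using False F1 v by (simp add: gfun_def color_class_def)
          ultimately show ?thesis using H.nlap_g[OF v ij(3)] by simp
        qed
      qed
    qed
  qed
  have part1: ?D if E: "\<forall>i\<in>{1..k}. \<forall>j\<in>{1..k}. i \<noteq> j \<longrightarrow> eigenfunction V E (gfun V col i j)"
  proof (intro ballI impI)
    fix i v assume i: "i \<in> {1..k}" and v: "v \<in> V" and ne: "col v \<noteq> i"
    define m where "m = col v"
    have m: "m \<in> {1..k}" using H.colV[OF v] by (simp add: m_def)
    have eq: "H.B j v = H.B i v" if j: "j \<in> {1..k} - {m}" for j
    proof (cases "j = i")
      case False
      then obtain mu where mu: "eigenfunction_with V E (gfun V col i j) mu"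
        using E i j False by (metis DiffD1 eigenfunction_def)
      have g0: "gfun V col i j v = 0" using j ne v by (auto simp: gfun_def color_class_def m_def)
      have "nlap V E (gfun V col i j) v = 0" using mu v g0 by (auto simp: eigenfunction_with_def)
      then show ?thesis using H.nlap_g[OF v False[symmetric]] g0 H.hdeg_pos[OF v] by simp
    qed simp
    have "(real c - 1) * real (hdeg E v) = (\<Sum>j\<in>{1..k}. H.B j v)" using H.B_sum[OF v] by simp
    also have "\<dots> = H.B m v + (\<Sum>j\<in>{1..k} - {m}. H.B j v)"
      using m by (simp add: sum.remove)
    also have "\<dots> = (real k - 1) * H.B i v"
      using eq H.B_own[OF v] m by (simp add: m_def of_nat_diff)
    finally show "H.B i v = (real c - 1) * real (hdeg E v) / (real k - 1)"
      using kpos by (simp add: field_simps)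
  qed
  show ?thesis
  proof (intro conjI impI)
    show "(\<forall>i\<in>{1..k}. \<forall>j\<in>{1..k}. i \<noteq> j \<longrightarrow> eigenfunction V E (gfun V col i j)) \<longleftrightarrow> ?C"
    proof
      assume "\<forall>i\<in>{1..k}. \<forall>j\<in>{1..k}. i \<noteq> j \<longrightarrow> eigenfunction V E (gfun V col i j)"
      then show ?C using part1 CD by blast
    next
      assume ?C
      then show "\<forall>i\<in>{1..k}. \<forall>j\<in>{1..k}. i \<noteq> j \<longrightarrow> eigenfunction V E (gfun V col i j)"
      proof (intro ballI impI)
        fix i j assume "i \<in> {1..k}" "j \<in> {1..k}" "i \<noteq> j"
        then have "eigenfunction_with V E (gfun V col i j) ((real k - real c) / (real k - 1))"
          using part2 CD \<open>?C\<close> by blast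
        then show "eigenfunction V E (gfun V col i j)" unfolding eigenfunction_def by blast
      qed
    qed
  next
    assume ?C
    then show "\<forall>i\<in>{1..k}. \<forall>j\<in>{1..k}. i \<noteq> j \<longrightarrow>
                 eigenfunction_with V E (gfun V col i j) ((real k - real c) / (real k - 1))"
      using part2 CD by blast
  qed
qed

end
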